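(* Optimum Stack Generation over an alphabet $\Sigma$ can be reduced to the scored parsing problem of a bounded-difference scored grammar in Chomsky normal form. The size of the grammar is polynomial in $|\Sigma|$, and the input string is not changed by the reduction.
   Context: Optimum Stack Generation: given a finite alphabet $\Sigma$ and a string $\sigma\in\Sigma^*$, starting from an empty stack, find the minimum length of a sequence of operations push$(c)$ ($c\in\Sigma$), emit (print the top symbol) and pop that prints exactly $\sigma$ and ends with an empty stack. A scored grammar is a CFG whose productions $p$ carry non-negative integer scores $s(p)$; $s(X,\sigma)$ is the minimum total score of a derivation $X\to^*\sigma$ ($\infty$ if none). It is $W$-bounded-difference if for every non-terminal $X$, terminal $x$, non-empty terminal string $\sigma$: $|s(X,\sigma)-s(X,\sigma x)|\le W$ and $|s(X,\sigma)-s(X,x\sigma)|\le W$; bounded-difference means $W=O(1)$. Chomsky normal form: productions $Z\to XY$, $Z\to c$, $S\to\varepsilon$ with $X,Y$ non-terminals different from the start symbol $S$. The scored parsing problem asks for $s(S,\sigma)$ for the start symbol $S$. *)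

theory Defs
  imports Main "HOL-Library.Extended_Nat"
begin

datatype 'a stack_op = Push 'a | Emit | Pop

fun run_ops :: "'a stack_op list \<Rightarrow> 'a list \<Rightarrow> 'a list \<Rightarrow> ('a list \<times> 'a list) option" where
  "run_ops [] st out = Some (st, out)"
| "run_ops (Push c # ops) st out = run_ops ops (c # st) out"
| "run_ops (Emit # ops) [] out = None"
| "run_ops (Emit # ops) (c # st) out = run_ops ops (c # st) (out @ [c])"
| "run_ops (Pop # ops) [] out = None"
| "run_ops (Pop # ops) (c # st) out = run_ops ops st out"

definition generates :: "'a set \<Rightarrow> 'a stack_op list \<Rightarrow> 'a list \<Rightarrow> bool" where
  "generates \<Sigma> ops \<sigma> \<longleftrightarrow>
     (\<forall>c. Push c \<in> set ops \<longrightarrow> c \<in> \<Sigma>) \<and> run_ops ops [] [] = Some ([], \<sigma>)"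

definition osg :: "'a set \<Rightarrow> 'a list \<Rightarrow> nat" where
  "osg \<Sigma> \<sigma> = (LEAST n. \<exists>ops. generates \<Sigma> ops \<sigma> \<and> length ops = n)"

datatype ('n, 'a) cnf_prod = Bin 'n 'n 'n | Term 'n 'a | Eps 'n

record ('n, 'a) sgrammar =
  prods :: "('n, 'a) cnf_prod set"
  score :: "('n, 'a) cnf_prod \<Rightarrow> nat"
  start :: 'n

definition cnf_over :: "'a set \<Rightarrow> ('n, 'a) sgrammar \<Rightarrow> bool" where
  "cnf_over \<Sigma> G \<longleftrightarrow> finite (prods G) \<and>
     (\<forall>p \<in> prods G. case p of
        Bin Z X Y \<Rightarrow> X \<noteq> start G \<and> Y \<noteq> start G
      | Term Z c \<Rightarrow> c \<in> \<Sigma>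
      | Eps Z \<Rightarrow> Z = start G)"

inductive derives :: "('n, 'a) sgrammar \<Rightarrow> 'n \<Rightarrow> 'a list \<Rightarrow> nat \<Rightarrow> bool" for G where
  d_term: "Term X c \<in> prods G \<Longrightarrow> derives G X [c] (score G (Term X c))"
| d_eps: "Eps X \<in> prods G \<Longrightarrow> derives G X [] (score G (Eps X))"
| d_bin: "Bin Z X Y \<in> prods G \<Longrightarrow> derives G X u k1 \<Longrightarrow> derives G Y v k2 \<Longrightarrow>
        derives G Z (u @ v) (score G (Bin Z X Y) + k1 + k2)"

definition sscore :: "('n, 'a) sgrammar \<Rightarrow> 'n \<Rightarrow> 'a list \<Rightarrow> enat" where
  "sscore G X w = (INF k \<in> {k. derives G X w k}. enat k)"

text \<open>W-bounded difference (with the convention |inf - inf| = 0 and |inf - n| = inf).\<close>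
definition bounded_diff :: "'a set \<Rightarrow> ('n, 'a) sgrammar \<Rightarrow> nat \<Rightarrow> bool" where
  "bounded_diff \<Sigma> G W \<longleftrightarrow>
     (\<forall>X. \<forall>x \<in> \<Sigma>. \<forall>\<sigma>. \<sigma> \<noteq> [] \<and> set \<sigma> \<subseteq> \<Sigma> \<longrightarrow>
        sscore G X \<sigma> \<le> sscore G X (\<sigma> @ [x]) + enat W \<and>
        sscore G X (\<sigma> @ [x]) \<le> sscore G X \<sigma> + enat W \<and>
        sscore G X \<sigma> \<le> sscore G X (x # \<sigma>) + enat W \<and>
        sscore G X (x # \<sigma>) \<le> sscore G X \<sigma> + enat W)"

definition gsize :: "('n, 'a) sgrammar \<Rightarrow> nat" where
  "gsize G = card (prods G)"

end

theory Submission
  imports Defs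
begin


lemma run_ops_append:
  "run_ops (o1 @ o2) st out = (case run_ops o1 st out of None \<Rightarrow> None | Some (s, u) \<Rightarrow> run_ops o2 s u)"
  by (induction o1 st out rule: run_ops.induct) auto

lemma sscore_eq:
  "sscore G X w = (if \<exists>k. derives G X w k then enat (LEAST k. derives G X w k) else \<infinity>)"
proof (cases "\<exists>k. derives G X w k")
  case True
  let ?m = "LEAST k. derives G X w k"
  have m: "derives G X w ?m" using True by (rule LeastI_ex)
  have "(INF k \<in> {k. derives G X w k}. enat k) = enat ?m"
  proof (rule antisym)
    show "(INF k \<in> {k. derives G X w k}. enat k) \<le> enat ?m"
      using m by (intro INF_lower) simp
    show "enat ?m \<le> (INF k \<in> {k. derives G X w k}. enat k)"
      by (rule INF_greatest) (simp add: Least_le)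
  qed
  then show ?thesis using True by (simp add: sscore_def)
next
  case False
  then show ?thesis by (simp add: sscore_def top_enat_def)
qed

lemma sscore_le:
  assumes "\<And>k. derives G X u k \<Longrightarrow> \<exists>k'\<le>k+W. derives G X v k'"
  shows "sscore G X v \<le> sscore G X u + enat W"
proof (cases "\<exists>k. derives G X u k")
  case True
  let ?m = "LEAST k. derives G X u k"
  have m: "derives G X u ?m" using True by (rule LeastI_ex)
  then obtain k' where k': "k' \<le> ?m + W" "derives G X v k'" using assms by blast
  have "(LEAST k. derives G X v k) \<le> k'" using k'(2) by (rule Least_le)
  then show ?thesis using True k' by (auto simp: sscore_eq)
next
  case False
  then show ?thesis by (simp add: sscore_eq)
qed

lemma ops_exist:
  assumes "set \<sigma> \<subseteq> \<Sigma>" shows "\<exists>ops. generates \<Sigma> ops \<sigma>"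
proof -
  have r: "run_ops (concat (map (\<lambda>c. [Push c, Emit, Pop]) \<sigma>) @ r) st out = run_ops r st (out @ \<sigma>)"
    for r st out
    by (induction \<sigma> arbitrary: out) auto
  have "run_ops (concat (map (\<lambda>c. [Push c, Emit, Pop]) \<sigma>)) [] [] = Some ([], \<sigma>)"
    using r[of "[]" "[]" "[]"] by simp
  moreover have "\<forall>c. Push c \<in> set (concat (map (\<lambda>c. [Push c, Emit, Pop]) \<sigma>)) \<longrightarrow> c \<in> \<Sigma>"
    using assms by auto
  ultimately show ?thesis unfolding generates_def by blast
qed



locale osgG =
  fixes \<Sigma> :: "'a set" and nt :: "'a \<Rightarrow> nat"
  assumes fin: "finite \<Sigma>" and inj: "inj_on nt \<Sigma>" and ge2: "\<And>c. nt c \<ge> 2"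
begin

definition LHS :: "nat set" where "LHS = {0,1} \<union> nt ` \<Sigma>"

definition P1 :: "(nat, 'a) cnf_prod set" where "P1 = (\<lambda>Z. Bin Z 1 1) ` {0,1}"
definition P2 :: "(nat, 'a) cnf_prod set" where "P2 = (\<lambda>(Z,d). Term Z d) ` (LHS \<times> \<Sigma>)"
definition P3 :: "(nat, 'a) cnf_prod set" where "P3 = (\<lambda>(Z,d). Bin Z (nt d) (nt d)) ` (LHS \<times> \<Sigma>)"

definition PR :: "(nat, 'a) cnf_prod set" where
  "PR = {Eps 0} \<union> P1 \<union> P2 \<union> P3"

lemmas PR_defs = PR_def P1_def P2_def P3_def

definition sc :: "(nat, 'a) cnf_prod \<Rightarrow> nat" where
  "sc p = (case p of Bin Z X Y \<Rightarrow> if X = 1 \<or> Z = X then 0 else 2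
       | Term Z d \<Rightarrow> if Z = nt d then 1 else 3 | Eps Z \<Rightarrow> 0)"

definition G :: "(nat, 'a) sgrammar" where
  "G = \<lparr>prods = PR, score = sc, start = 0\<rparr>"

lemma G_simps[simp]: "prods G = PR" "score G = sc" "start G = 0"
  by (simp_all add: G_def)

lemma nt_ne[simp]: "nt c \<noteq> 0" "nt c \<noteq> 1" "0 \<noteq> nt c" "1 \<noteq> nt c" "Suc 0 \<noteq> nt c" "nt c \<noteq> Suc 0" "\<not> nt c \<le> Suc 0" "0 < nt c"
  using ge2[of c] by auto

lemma nt_eq[simp]: "c \<in> \<Sigma> \<Longrightarrow> d \<in> \<Sigma> \<Longrightarrow> nt c = nt d \<longleftrightarrow> c = d"
  using inj by (auto simp: inj_on_def)

lemma LHS_iff: "Z \<in> LHS \<longleftrightarrow> Z = 0 \<or> Z = 1 \<or> (\<exists>c\<in>\<Sigma>. Z = nt c)"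
  by (auto simp: LHS_def)

lemma bin_mem: "Bin Z X Y \<in> PR \<longleftrightarrow> X = Y \<and> ((X = 1 \<and> Z \<le> 1) \<or> (\<exists>d\<in>\<Sigma>. X = nt d \<and> Z \<in> LHS))"
  by (auto simp: PR_defs LHS_def)

lemma term_mem: "Term Z d \<in> PR \<longleftrightarrow> Z \<in> LHS \<and> d \<in> \<Sigma>"
  by (auto simp: PR_defs)

lemma eps_mem: "Eps Z \<in> PR \<longleftrightarrow> Z = 0"
  by (auto simp: PR_defs)

lemma sc_simps[simp]: "sc (Bin Z X Y) = (if X = 1 \<or> Z = X then 0 else 2)"
  "sc (Term Z d) = (if Z = nt d then 1 else 3)" "sc (Eps Z) = 0"
  by (simp_all add: sc_def)

lemma bin_rule: "Bin Z X Y \<in> PR \<Longrightarrow> derives G X u k1 \<Longrightarrow> derives G Y v k2 \<Longrightarrow>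
   K = sc (Bin Z X Y) + k1 + k2 \<Longrightarrow> w = u @ v \<Longrightarrow> derives G Z w K"
  using derives.d_bin[of Z X Y G u k1 v k2] by simp

lemma term_rule: "Term Z d \<in> PR \<Longrightarrow> K = sc (Term Z d) \<Longrightarrow> w = [d] \<Longrightarrow> derives G Z w K"
  using derives.d_term[of Z d G] by simp

lemma LHS_0[simp]: "0 \<in> LHS" and LHS_1[simp]: "1 \<in> LHS" and LHS_S[simp]: "Suc 0 \<in> LHS" and LHS_nt[simp]: "c \<in> \<Sigma> \<Longrightarrow> nt c \<in> LHS"
  by (auto simp: LHS_def)

lemma L1:
  assumes "derives G (nt d) v k" "d \<in> \<Sigma>" "c \<in> \<Sigma>"
  shows "\<exists>k'\<le>k+2. derives G (nt c) v k'"
  using assms(1)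
proof (cases rule: derives.cases)
  case (d_term e)
  then have "e \<in> \<Sigma>" by (simp add: term_mem)
  have "derives G (nt c) [e] (sc (Term (nt c) e))"
    by (rule term_rule) (use assms \<open>e \<in> \<Sigma>\<close> in \<open>auto simp: term_mem\<close>)
  then show ?thesis using d_term by (intro exI[of _ "sc (Term (nt c) e)"]) auto
next
  case d_eps
  then show ?thesis by (simp add: eps_mem)
next
  case (d_bin X Y u k1 w k2)
  then obtain e where e: "e \<in> \<Sigma>" "X = nt e" "Y = nt e"
    by (auto simp: bin_mem)
  have "derives G (nt c) v (sc (Bin (nt c) (nt e) (nt e)) + k1 + k2)"
    by (rule bin_rule[of _ X Y u k1 w k2]) (use d_bin e assms in \<open>auto simp: bin_mem\<close>)
  then show ?thesis using d_bin by (intro exI[of _ "sc (Bin (nt c) (nt e) (nt e)) + k1 + k2"]) auto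
qed

lemma L2:
  assumes "derives G (nt d) v k" "d \<in> \<Sigma>"
  shows "\<exists>k'\<le>k+2. derives G 1 v k'"
  using assms(1)
proof (cases rule: derives.cases)
  case (d_term e)
  then have "e \<in> \<Sigma>" by (simp add: term_mem)
  have "derives G 1 [e] (sc (Term 1 e))"
    by (rule term_rule) (use assms \<open>e \<in> \<Sigma>\<close> in \<open>auto simp: term_mem\<close>)
  then show ?thesis using d_term by (intro exI[of _ "sc (Term 1 e)"]) auto
next
  case d_eps
  then show ?thesis by (simp add: eps_mem)
next
  case (d_bin X Y u k1 w k2)
  then obtain e where e: "e \<in> \<Sigma>" "X = nt e" "Y = nt e"
    by (auto simp: bin_mem)
  have "derives G 1 v (sc (Bin 1 (nt e) (nt e)) + k1 + k2)"
    by (rule bin_rule[of _ X Y u k1 w k2]) (use d_bin e assms in \<open>auto simp: bin_mem\<close>)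
  then show ?thesis using d_bin by (intro exI[of _ "sc (Bin 1 (nt e) (nt e)) + k1 + k2"]) auto
qed

lemma L3:
  assumes "derives G 1 v k"
  shows "derives G 0 v k"
  using assms
proof (cases rule: derives.cases)
  case (d_term e)
  show ?thesis by (rule term_rule[of _ e]) (use d_term in \<open>auto simp: term_mem\<close>)
next
  case d_eps
  then show ?thesis by (simp add: eps_mem)
next
  case (d_bin X Y u k1 w k2)
  show ?thesis by (rule bin_rule[of _ X Y u k1 w k2]) (use d_bin in \<open>auto simp: bin_mem\<close>)
qed

lemma L4:
  assumes "derives G 0 v k" "v \<noteq> []"
  shows "derives G 1 v k"
  using assms(1)
proof (cases rule: derives.cases)
  case (d_term e)
  show ?thesis by (rule term_rule[of _ e]) (use d_term in \<open>auto simp: term_mem\<close>)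
next
  case d_eps
  then show ?thesis using assms(2) by simp
next
  case (d_bin X Y u k1 w k2)
  show ?thesis by (rule bin_rule[of _ X Y u k1 w k2]) (use d_bin in \<open>auto simp: bin_mem\<close>)
qed

end


context osgG begin

definition ok :: "nat \<Rightarrow> 'a list \<Rightarrow> bool" where
  "ok X st \<longleftrightarrow> X \<le> 1 \<or> (\<exists>c\<in>\<Sigma>. X = nt c \<and> st \<noteq> [] \<and> hd st = c)"

definition pok :: "'a stack_op list \<Rightarrow> bool" where
  "pok ops \<longleftrightarrow> (\<forall>c. Push c \<in> set ops \<longrightarrow> c \<in> \<Sigma>)"

lemma deriv_ops:
  "derives G X w k \<Longrightarrow> \<exists>ops. pok ops \<and> length ops \<le> k \<and>
     (\<forall>st out. ok X st \<longrightarrow> run_ops ops st out = Some (st, out @ w))"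
proof (induction rule: derives.induct)
  case (d_term X c)
  then have X: "X \<in> LHS" and c: "c \<in> \<Sigma>" by (auto simp: term_mem)
  show ?case
  proof (cases "X = nt c")
    case True
    have "ok X st \<Longrightarrow> run_ops [Emit] st out = Some (st, out @ [c])" for st out
      using True c by (cases st) (auto simp: ok_def)
    then show ?thesis using True by (intro exI[of _ "[Emit]"]) (auto simp: pok_def)
  next
    case False
    have "run_ops [Push c, Emit, Pop] st out = Some (st, out @ [c])" for st out
      by simp
    then show ?thesis using False c by (intro exI[of _ "[Push c, Emit, Pop]"]) (auto simp: pok_def)
  qed
next
  case (d_eps X)
  then show ?case by (intro exI[of _ "[]"]) (auto simp: pok_def eps_mem)
next
  case (d_bin Z X Y u k1 v k2)
  from d_bin.IH obtain o1 where o1: "pok o1" "length o1 \<le> k1"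
    "\<And>st out. ok X st \<Longrightarrow> run_ops o1 st out = Some (st, out @ u)" by blast
  from d_bin.IH obtain o2 where o2: "pok o2" "length o2 \<le> k2"
    "\<And>st out. ok Y st \<Longrightarrow> run_ops o2 st out = Some (st, out @ v)" by blast
  have XY: "X = Y" and cases: "(X = 1 \<and> Z \<le> 1) \<or> (\<exists>d\<in>\<Sigma>. X = nt d \<and> Z \<in> LHS)"
    using d_bin.hyps(1) by (auto simp: bin_mem)
  show ?case
  proof (cases "X = 1 \<or> Z = X")
    case True
    have "ok Z st \<Longrightarrow> ok X st" for st using True cases by (auto simp: ok_def)
    then have "ok Z st \<Longrightarrow> run_ops (o1 @ o2) st out = Some (st, out @ (u @ v))" for st out
      using o1(3) o2(3) XY by (simp add: run_ops_append)
    moreover have "pok (o1 @ o2)" using o1 o2 by (auto simp: pok_def)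
    ultimately show ?thesis using True o1(2) o2(2)
      by (intro exI[of _ "o1 @ o2"]) auto
  next
    case False
    then obtain d where d: "d \<in> \<Sigma>" "X = nt d" using cases by auto
    have okd: "ok X (d # st)" for st using d by (auto simp: ok_def)
    have "run_ops (Push d # o1 @ o2 @ [Pop]) st out = Some (st, out @ (u @ v))" for st out
      using o1(3)[OF okd] o2(3)[OF okd[unfolded XY]] by (simp add: run_ops_append)
    moreover have "pok (Push d # o1 @ o2 @ [Pop])" using o1 o2 d by (auto simp: pok_def)
    ultimately show ?thesis using False o1(2) o2(2)
      by (intro exI[of _ "Push d # o1 @ o2 @ [Pop]"]) auto
  qed
qed

definition Cle :: "'a \<Rightarrow> 'a list \<Rightarrow> nat \<Rightarrow> bool" where
  "Cle c w n \<longleftrightarrow> w = [] \<or> (\<exists>k\<le>n. derives G (nt c) w k)"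

definition Tle :: "'a list \<Rightarrow> nat \<Rightarrow> bool" where
  "Tle w n \<longleftrightarrow> w = [] \<or> (\<exists>k\<le>n. derives G 1 w k)"

fun Q :: "'a list \<Rightarrow> 'a list \<Rightarrow> nat \<Rightarrow> bool" where
  "Q [] w n = Tle w n"
| "Q (c # st) w n = (\<exists>w1 w2 n1 n2. w = w1 @ w2 \<and> Cle c w1 n1 \<and> Q st w2 n2 \<and> n1 + 1 + n2 \<le> n)"

lemma Tle_mono: "Tle w n \<Longrightarrow> n \<le> m \<Longrightarrow> Tle w m"
  unfolding Tle_def using order_trans by blast

lemma G1:
  assumes "Cle d v n1" "Cle c w n2" "c \<in> \<Sigma>" "d \<in> \<Sigma>"
  shows "Cle c (v @ w) (n1 + 2 + n2)"
proof (cases "v = []")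
  case True
  then show ?thesis using assms(2) unfolding Cle_def by auto
next
  case False
  then obtain k1 where k1: "k1 \<le> n1" "derives G (nt d) v k1" using assms(1) by (auto simp: Cle_def)
  then obtain k1' where k1': "k1' \<le> k1 + 2" "derives G (nt c) v k1'" using L1 assms by blast
  show ?thesis
  proof (cases "w = []")
    case True
    then show ?thesis using k1 k1' unfolding Cle_def by (intro disjI2 exI[of _ k1']) auto
  next
    case False
    then obtain k2 where k2: "k2 \<le> n2" "derives G (nt c) w k2" using assms(2) by (auto simp: Cle_def)
    have "derives G (nt c) (v @ w) (sc (Bin (nt c) (nt c) (nt c)) + k1' + k2)"
      by (rule bin_rule[OF _ k1'(2) k2(2)]) (use assms in \<open>auto simp: bin_mem\<close>)
    then show ?thesis using k1 k1' k2 unfolding Cle_def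
      by (intro disjI2 exI[of _ "k1' + k2"]) auto
  qed
qed

lemma G2:
  assumes "Cle c w n" "c \<in> \<Sigma>"
  shows "Cle c (c # w) (n + 1)"
proof -
  have t: "derives G (nt c) [c] 1"
    by (rule term_rule) (use assms in \<open>auto simp: term_mem\<close>)
  show ?thesis
  proof (cases "w = []")
    case True
    then show ?thesis using t unfolding Cle_def by auto
  next
    case False
    then obtain k where k: "k \<le> n" "derives G (nt c) w k" using assms(1) by (auto simp: Cle_def)
    have "derives G (nt c) ([c] @ w) (sc (Bin (nt c) (nt c) (nt c)) + 1 + k)"
      by (rule bin_rule[OF _ t k(2)]) (use assms in \<open>auto simp: bin_mem\<close>)
    then show ?thesis using k unfolding Cle_def by (intro disjI2 exI[of _ "1 + k"]) auto
  qed
qed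

lemma G3:
  assumes "Cle c v n1" "Tle w n2" "c \<in> \<Sigma>"
  shows "Tle (v @ w) (n1 + 2 + n2)"
proof (cases "v = []")
  case True
  then show ?thesis using assms(2) Tle_mono by auto
next
  case False
  then obtain k1 where k1: "k1 \<le> n1" "derives G (nt c) v k1" using assms(1) by (auto simp: Cle_def)
  then obtain k1' where k1': "k1' \<le> k1 + 2" "derives G 1 v k1'" using L2 assms by blast
  show ?thesis
  proof (cases "w = []")
    case True
    then show ?thesis using k1 k1' unfolding Tle_def by (intro disjI2 exI[of _ k1']) auto
  next
    case False
    then obtain k2 where k2: "k2 \<le> n2" "derives G 1 w k2" using assms(2) by (auto simp: Tle_def)
    have "derives G 1 (v @ w) (sc (Bin 1 1 1) + k1' + k2)"
      by (rule bin_rule[OF _ k1'(2) k2(2)]) (use assms in \<open>auto simp: bin_mem\<close>)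
    then show ?thesis using k1 k1' k2 unfolding Tle_def
      by (intro disjI2 exI[of _ "k1' + k2"]) auto
  qed
qed

lemma inv:
  "run_ops ops st out = Some ([], out') \<Longrightarrow> pok ops \<Longrightarrow> set st \<subseteq> \<Sigma> \<Longrightarrow>
   \<exists>w. out' = out @ w \<and> Q st w (length ops)"
proof (induction ops st out rule: run_ops.induct)
  case (1 st out)
  then show ?case by (auto simp: Tle_def)
next
  case (2 c ops st out)
  then have c: "c \<in> \<Sigma>" and p: "pok ops" by (auto simp: pok_def)
  have "\<exists>w. out' = out @ w \<and> Q (c # st) w (length ops)"
    by (rule 2(1)) (use 2(2,4) c p in auto)
  then obtain w where w: "out' = out @ w" "Q (c # st) w (length ops)" by blast
  obtain w1 w2 n1 n2 where q: "w = w1 @ w2" "Cle c w1 n1" "Q st w2 n2" "n1 + 1 + n2 \<le> length ops"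
    using w(2) unfolding Q.simps by blast
  show ?case
  proof (cases st)
    case Nil
    then have "Tle w2 n2" using q by simp
    then have "Tle (w1 @ w2) (n1 + 2 + n2)" using G3 q c by blast
    then have "Tle w (length (Push c # ops))" using q Tle_mono by auto
    then show ?thesis using w Nil by auto
  next
    case (Cons d st'')
    then obtain v1 v2 m1 m2 where r: "w2 = v1 @ v2" "Cle d v1 m1" "Q st'' v2 m2" "m1 + 1 + m2 \<le> n2"
      using q by auto
    have d: "d \<in> \<Sigma>" using 2(4) Cons by auto
    have g: "Cle d (w1 @ v1) (n1 + 2 + m1)" using G1[OF q(2) r(2) d c] .
    have wv: "w = (w1 @ v1) @ v2" using q r by simp
    have e: "n1 + 2 + m1 + 1 + m2 \<le> length (Push c # ops)" using q r by simp
    have "Q (d # st'') w (length (Push c # ops))" unfolding Q.simps using wv g r(3) e by blast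
    then have "Q st w (length (Push c # ops))" using Cons by simp
    then show ?thesis using w by auto
  qed
next
  case (3 ops out)
  then show ?case by simp
next
  case (4 ops c st out)
  then have c: "c \<in> \<Sigma>" and p: "pok ops" by (auto simp: pok_def)
  have "\<exists>w. out' = (out @ [c]) @ w \<and> Q (c # st) w (length ops)"
    by (rule 4(1)) (use 4(2,4) c p in auto)
  then obtain w where w: "out' = (out @ [c]) @ w" "Q (c # st) w (length ops)" by blast
  obtain w1 w2 n1 n2 where q: "w = w1 @ w2" "Cle c w1 n1" "Q st w2 n2" "n1 + 1 + n2 \<le> length ops"
    using w(2) unfolding Q.simps by blast
  have g: "Cle c (c # w1) (n1 + 1)" using G2[OF q(2) c] .
  have wv: "c # w = (c # w1) @ w2" using q by simp
  have e: "n1 + 1 + 1 + n2 \<le> length (Emit # ops)" using q by simp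
  have "Q (c # st) (c # w) (length (Emit # ops))" unfolding Q.simps using wv g q(3) e by blast
  then show ?case using w by auto
next
  case (5 ops out)
  then show ?case by simp
next
  case (6 ops c st out)
  then have p: "pok ops" by (auto simp: pok_def)
  have "\<exists>w. out' = out @ w \<and> Q st w (length ops)"
    by (rule 6(1)) (use 6(2,4) p in auto)
  then obtain w where w: "out' = out @ w" "Q st w (length ops)" by blast
  have g: "Cle c [] 0" by (simp add: Cle_def)
  have "Q (c # st) ([] @ w) (length (Pop # ops))" unfolding Q.simps
    using g w(2) by (intro exI[of _ "[]"] exI[of _ w] exI[of _ 0] exI[of _ "length ops"]) simp
  then have "Q (c # st) w (length (Pop # ops))" by simp
  then show ?case using w by auto
qed

end


context osgG begin

lemma NE: "derives G X w k \<Longrightarrow> X \<noteq> 0 \<Longrightarrow> w \<noteq> []"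
proof (induction rule: derives.induct)
  case (d_eps X) then show ?case by (simp add: eps_mem)
next
  case (d_bin Z X Y u k1 v k2)
  then have "X \<noteq> 0" by (auto simp: bin_mem)
  then show ?case using d_bin by simp
qed simp

lemma collapse:
  assumes "Bin Z X Y \<in> PR" "derives G X u k"
  shows "\<exists>k'\<le>sc (Bin Z X Y) + k. derives G Z u k'"
proof -
  from assms(1) have XY: "X = Y" and cs: "(X = 1 \<and> Z \<le> 1) \<or> (\<exists>d\<in>\<Sigma>. X = nt d \<and> Z \<in> LHS)"
    by (auto simp: bin_mem)
  show ?thesis
  proof (cases "Z = X")
    case True then show ?thesis using assms by auto
  next
    case False
    show ?thesis
    proof (cases "X = 1")
      case True
      then have "Z = 0" using cs False by auto
      then show ?thesis using L3 assms True by auto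
    next
      case X1: False
      then obtain d where d: "d \<in> \<Sigma>" "X = nt d" "Z \<in> LHS" using cs by auto
      have s: "sc (Bin Z X Y) = 2" using False X1 by simp
      from d(3) consider "Z = 0" | "Z = 1" | c where "c \<in> \<Sigma>" "Z = nt c" by (auto simp: LHS_iff)
      then show ?thesis
      proof cases
        case 1
        obtain k' where "k' \<le> k + 2" "derives G 1 u k'" using L2 assms(2) d by blast
        then show ?thesis using 1 s L3 by auto
      next
        case 2
        obtain k' where "k' \<le> k + 2" "derives G 1 u k'" using L2 assms(2) d by blast
        then show ?thesis using 2 s by auto
      next
        case 3
        obtain k' where "k' \<le> k + 2" "derives G (nt c) u k'" using L1 assms(2) d 3 by blast
        then show ?thesis using 3 s by auto
      qed
    qed
  qed
qed

lemma del_back: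
  "derives G X w k \<Longrightarrow> w = \<sigma> @ [x] \<Longrightarrow> \<sigma> \<noteq> [] \<Longrightarrow> \<exists>k'\<le>k. derives G X \<sigma> k'"
proof (induction arbitrary: \<sigma> rule: derives.induct)
  case (d_bin Z X Y u k1 v k2)
  have b: "Bin Z X Y \<in> PR" using d_bin.hyps(1) by simp
  have "Y \<noteq> 0" using d_bin.hyps(1) by (auto simp: bin_mem)
  then have vne: "v \<noteq> []" using NE d_bin.hyps(3) by blast
  define v' where "v' = butlast v"
  have vv: "v = v' @ [x]" and uv: "u @ v' = \<sigma>"
    using d_bin.prems(1) vne unfolding v'_def
    by (metis append_butlast_last_id append_assoc butlast_append butlast_snoc last_appendR last_snoc)+
  show ?case
  proof (cases "v' = []")
    case True
    then have "u = \<sigma>" using uv by simp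
    then obtain k' where "k' \<le> sc (Bin Z X Y) + k1" "derives G Z \<sigma> k'"
      using collapse[OF b d_bin.hyps(2)] by blast
    then show ?thesis by (intro exI[of _ k']) auto
  next
    case False
    then obtain k2' where k2': "k2' \<le> k2" "derives G Y v' k2'" using d_bin.IH(2) vv by blast
    have "derives G Z \<sigma> (sc (Bin Z X Y) + k1 + k2')"
      by (rule bin_rule[OF b d_bin.hyps(2) k2'(2)]) (use uv in auto)
    then show ?thesis using k2' by (intro exI[of _ "sc (Bin Z X Y) + k1 + k2'"]) auto
  qed
qed auto

lemma del_front:
  "derives G X w k \<Longrightarrow> w = x # \<sigma> \<Longrightarrow> \<sigma> \<noteq> [] \<Longrightarrow> \<exists>k'\<le>k. derives G X \<sigma> k'"
proof (induction arbitrary: \<sigma> rule: derives.induct)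
  case (d_bin Z X Y u k1 v k2)
  have b: "Bin Z X Y \<in> PR" using d_bin.hyps(1) by simp
  have "X \<noteq> 0" and XY: "X = Y" using d_bin.hyps(1) by (auto simp: bin_mem)
  then have une: "u \<noteq> []" using NE d_bin.hyps(2) by blast
  then obtain u' where uu: "u = x # u'" and uv: "u' @ v = \<sigma>"
    using d_bin.prems(1) by (cases u) auto
  show ?case
  proof (cases "u' = []")
    case True
    then have "v = \<sigma>" using uv by simp
    moreover have "Bin Z Y Y \<in> PR" using d_bin.hyps(1) XY by simp
    ultimately obtain k' where "k' \<le> sc (Bin Z Y Y) + k2" "derives G Z \<sigma> k'"
      using collapse d_bin.hyps(3) by blast
    then show ?thesis using XY by (intro exI[of _ k']) auto
  next
    case False
    then obtain k1' where k1': "k1' \<le> k1" "derives G X u' k1'" using d_bin.IH(1) uu by blast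
    have "derives G Z \<sigma> (sc (Bin Z X Y) + k1' + k2)"
      by (rule bin_rule[OF b k1'(2) d_bin.hyps(3)]) (use uv in auto)
    then show ?thesis using k1' by (intro exI[of _ "sc (Bin Z X Y) + k1' + k2"]) auto
  qed
qed auto

lemma in_LHS: "derives G X w k \<Longrightarrow> X \<in> LHS"
  by (cases rule: derives.cases) (auto simp: term_mem eps_mem bin_mem LHS_iff)

lemma add_gen:
  assumes "derives G X \<sigma> k" "\<sigma> \<noteq> []" "x \<in> \<Sigma>"
  shows "(\<exists>k'\<le>k+3. derives G X (\<sigma> @ [x]) k') \<and> (\<exists>k'\<le>k+3. derives G X (x # \<sigma>) k')"
proof -
  have main: "(\<exists>k'\<le>k+3. derives G Y (\<sigma> @ [x]) k') \<and> (\<exists>k'\<le>k+3. derives G Y (x # \<sigma>) k')"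
    if Y: "derives G Y \<sigma> k" "Y \<in> LHS" "Y \<noteq> 0" for Y
  proof -
    have b: "Bin Y Y Y \<in> PR" using Y by (auto simp: bin_mem LHS_iff)
    have t: "derives G Y [x] (sc (Term Y x))"
      by (rule term_rule) (use Y assms(3) in \<open>auto simp: term_mem\<close>)
    have s3: "sc (Term Y x) \<le> 3" by simp
    have "derives G Y (\<sigma> @ [x]) (sc (Bin Y Y Y) + k + sc (Term Y x))"
      by (rule bin_rule[OF b Y(1) t]) auto
    moreover have "derives G Y ([x] @ \<sigma>) (sc (Bin Y Y Y) + sc (Term Y x) + k)"
      by (rule bin_rule[OF b t Y(1)]) auto
    ultimately show ?thesis using s3
      by (intro conjI exI[of _ "sc (Bin Y Y Y) + k + sc (Term Y x)"]
                exI[of _ "sc (Bin Y Y Y) + sc (Term Y x) + k"]) auto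
  qed
  show ?thesis
  proof (cases "X = 0")
    case False
    then show ?thesis using main assms in_LHS by blast
  next
    case True
    then have "derives G 1 \<sigma> k" using L4 assms by blast
    then have "(\<exists>k'\<le>k+3. derives G 1 (\<sigma> @ [x]) k') \<and> (\<exists>k'\<le>k+3. derives G 1 (x # \<sigma>) k')"
      using main by simp
    then show ?thesis using True L3 by blast
  qed
qed

lemma bdiff: "bounded_diff \<Sigma> G 3"
  unfolding bounded_diff_def
proof (intro allI ballI impI conjI)
  fix X x \<sigma> assume x: "x \<in> \<Sigma>" and s: "\<sigma> \<noteq> [] \<and> set \<sigma> \<subseteq> \<Sigma>"
  show "sscore G X \<sigma> \<le> sscore G X (\<sigma> @ [x]) + enat 3"
  proof (rule sscore_le)
    fix k assume "derives G X (\<sigma> @ [x]) k"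
    then obtain k' where "k' \<le> k" "derives G X \<sigma> k'" using del_back s by blast
    then show "\<exists>k'\<le>k+3. derives G X \<sigma> k'" by (intro exI[of _ k']) auto
  qed
  show "sscore G X (\<sigma> @ [x]) \<le> sscore G X \<sigma> + enat 3"
  proof (rule sscore_le)
    fix k assume "derives G X \<sigma> k"
    then show "\<exists>k'\<le>k+3. derives G X (\<sigma> @ [x]) k'" using add_gen s x by blast
  qed
  show "sscore G X \<sigma> \<le> sscore G X (x # \<sigma>) + enat 3"
  proof (rule sscore_le)
    fix k assume "derives G X (x # \<sigma>) k"
    then obtain k' where "k' \<le> k" "derives G X \<sigma> k'" using del_front s by blast
    then show "\<exists>k'\<le>k+3. derives G X \<sigma> k'" by (intro exI[of _ k']) auto
  qed
  show "sscore G X (x # \<sigma>) \<le> sscore G X \<sigma> + enat 3"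
  proof (rule sscore_le)
    fix k assume "derives G X \<sigma> k"
    then show "\<exists>k'\<le>k+3. derives G X (x # \<sigma>) k'" using add_gen s x by blast
  qed
qed

lemma cnf: "cnf_over \<Sigma> G"
  unfolding cnf_over_def
proof (intro conjI ballI)
  show "finite (prods G)" using fin by (simp add: PR_defs LHS_def)
  fix p assume p: "p \<in> prods G"
  show "case p of Bin Z X Y \<Rightarrow> X \<noteq> start G \<and> Y \<noteq> start G | Term Z c \<Rightarrow> c \<in> \<Sigma> | Eps Z \<Rightarrow> Z = start G"
  proof (cases p)
    case (Bin Z X Y) then show ?thesis using p by (auto simp: bin_mem)
  next
    case (Term Z c) then show ?thesis using p by (auto simp: term_mem)
  next
    case (Eps Z) then show ?thesis using p by (auto simp: eps_mem)
  qed
qed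

lemma size: "gsize G \<le> 10 * (card \<Sigma> + 1) ^ 2"
proof -
  let ?n = "card \<Sigma>"
  have cL: "card LHS \<le> ?n + 2"
  proof -
    have "card LHS \<le> card {0::nat,1} + card (nt ` \<Sigma>)" unfolding LHS_def by (rule card_Un_le)
    also have "\<dots> \<le> 2 + ?n" using card_image_le[OF fin, of nt] by simp
    finally show ?thesis by simp
  qed
  have fL: "finite LHS" using fin by (simp add: LHS_def)
  have c1: "card P2 \<le> (?n + 2) * ?n"
  proof -
    have "card P2 \<le> card LHS * ?n"
      unfolding P2_def using card_image_le[of "LHS \<times> \<Sigma>" "\<lambda>(Z,d). Term Z d"] fL fin
      by (simp add: card_cartesian_product)
    also have "\<dots> \<le> (?n + 2) * ?n" using cL by (rule mult_le_mono1)
    finally show ?thesis .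
  qed
  have c2: "card P3 \<le> (?n + 2) * ?n"
  proof -
    have "card P3 \<le> card LHS * ?n"
      unfolding P3_def using card_image_le[of "LHS \<times> \<Sigma>" "\<lambda>(Z,d). Bin Z (nt d) (nt d)"] fL fin
      by (simp add: card_cartesian_product)
    also have "\<dots> \<le> (?n + 2) * ?n" using cL by (rule mult_le_mono1)
    finally show ?thesis .
  qed
  have c0: "card P1 \<le> 2"
    unfolding P1_def using card_image_le[of "{0::nat,1}" "\<lambda>Z. Bin Z 1 1"] by simp
  have u: "card (A \<union> B \<union> C \<union> D) \<le> card A + card B + card C + card D" for A B C D :: "'x set"
  proof -
    have "card (A \<union> B \<union> C \<union> D) \<le> card (A \<union> B \<union> C) + card D" by (rule card_Un_le)
    also have "\<dots> \<le> card (A \<union> B) + card C + card D" using card_Un_le[of "A \<union> B" C] by simp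
    also have "\<dots> \<le> card A + card B + card C + card D" using card_Un_le[of A B] by simp
    finally show ?thesis .
  qed
  have "card PR \<le> card {Eps 0 :: (nat,'a) cnf_prod} + card P1 + card P2 + card P3"
    unfolding PR_def by (rule u)
  also have "\<dots> \<le> 3 + (?n + 2) * ?n + (?n + 2) * ?n" using c0 c1 c2 by simp
  also have "\<dots> \<le> 10 * (?n + 1) ^ 2" by (simp add: power2_eq_square algebra_simps)
  finally show ?thesis by (simp add: gsize_def)
qed

lemma correct:
  assumes "set \<sigma> \<subseteq> \<Sigma>"
  shows "sscore G (start G) \<sigma> = enat (osg \<Sigma> \<sigma>)"
proof -
  have lower: "osg \<Sigma> \<sigma> \<le> k" if dk: "derives G 0 \<sigma> k" for k
  proof -
    obtain ops where o: "pok ops" "length ops \<le> k"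
      "\<And>st out. ok 0 st \<Longrightarrow> run_ops ops st out = Some (st, out @ \<sigma>)"
      using deriv_ops[OF dk] by blast
    have "generates \<Sigma> ops \<sigma>" using o(1) o(3)[of "[]" "[]"] by (simp add: generates_def pok_def ok_def)
    then have "osg \<Sigma> \<sigma> \<le> length ops" unfolding osg_def by (intro Least_le) blast
    then show ?thesis using o(2) by simp
  qed
  have "\<exists>n ops. generates \<Sigma> ops \<sigma> \<and> length ops = n" using ops_exist[OF assms] by blast
  then have "\<exists>ops. generates \<Sigma> ops \<sigma> \<and> length ops = osg \<Sigma> \<sigma>"
    unfolding osg_def by (rule LeastI_ex)
  then obtain ops where o: "generates \<Sigma> ops \<sigma>" "length ops = osg \<Sigma> \<sigma>" by blast
  then have "run_ops ops [] [] = Some ([], \<sigma>)" "pok ops" by (auto simp: generates_def pok_def)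
  then obtain w where "\<sigma> = [] @ w" "Q [] w (length ops)" using inv[of ops "[]" "[]" \<sigma>] by auto
  then have T: "Tle \<sigma> (osg \<Sigma> \<sigma>)" using o by simp
  have "\<exists>k\<le>osg \<Sigma> \<sigma>. derives G 0 \<sigma> k"
  proof (cases "\<sigma> = []")
    case True
    have "derives G 0 [] (sc (Eps 0))" using derives.d_eps[of 0 G] by (simp add: eps_mem)
    then show ?thesis using True by auto
  next
    case False
    then show ?thesis using T L3 by (auto simp: Tle_def)
  qed
  then obtain k where k: "k \<le> osg \<Sigma> \<sigma>" "derives G 0 \<sigma> k" by blast
  then have kk: "k = osg \<Sigma> \<sigma>" using lower by (simp add: le_antisym)
  have "(LEAST k. derives G 0 \<sigma> k) = osg \<Sigma> \<sigma>"
    by (rule Least_equality) (use k kk lower in auto)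
  moreover have "\<exists>k. derives G 0 \<sigma> k" using k by blast
  ultimately show ?thesis by (simp add: sscore_eq)
qed

end

theorem proposition2:
  shows "\<exists>W C d :: nat. \<forall>\<Sigma> :: 'a set. finite \<Sigma> \<longrightarrow>
     (\<exists>G :: (nat, 'a) sgrammar.
        cnf_over \<Sigma> G \<and> bounded_diff \<Sigma> G W \<and>
        gsize G \<le> C * (card \<Sigma> + 1) ^ d \<and>
        (\<forall>\<sigma>. set \<sigma> \<subseteq> \<Sigma> \<longrightarrow> sscore G (start G) \<sigma> = enat (osg \<Sigma> \<sigma>)))"
proof (rule exI[of _ 3], rule exI[of _ 10], rule exI[of _ 2], intro allI impI)
  fix \<Sigma> :: "'a set" assume fin: "finite \<Sigma>"
  obtain f :: "'a \<Rightarrow> nat" where f: "inj_on f \<Sigma>" using finite_imp_inj_to_nat_seg[OF fin] by blast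
  interpret osgG \<Sigma> "\<lambda>c. f c + 2"
    using fin f by unfold_locales (auto simp: inj_on_def)
  show "\<exists>G :: (nat, 'a) sgrammar.
        cnf_over \<Sigma> G \<and> bounded_diff \<Sigma> G 3 \<and>
        gsize G \<le> 10 * (card \<Sigma> + 1) ^ 2 \<and>
        (\<forall>\<sigma>. set \<sigma> \<subseteq> \<Sigma> \<longrightarrow> sscore G (start G) \<sigma> = enat (osg \<Sigma> \<sigma>))"
    using cnf bdiff size correct by blast
qed


end
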